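(* Let $\mathsf{Ax}\subseteq\{\mathsf{N}_\Diamond,\mathsf{C}_\Diamond,\mathsf{I}_{\Diamond\Box}\}$. Then $\mathsf{CK}\oplus\mathsf{Ax}$ is a conservative extension of $\mathsf{CK}_\Box$ if and only if $\mathsf{N}_\Diamond\notin\mathsf{Ax}$ or $\mathsf{I}_{\Diamond\Box}\notin\mathsf{Ax}$.
   Context: Formulas: $\mathbf{L}$ is generated from a countably infinite set of propositional variables by $\varphi ::= p \mid \bot \mid \varphi\wedge\varphi \mid \varphi\vee\varphi \mid \varphi\to\varphi \mid \Box\varphi \mid \Diamond\varphi$. Axioms: $\mathsf{K}_\Box$: $\Box(\varphi\to\psi)\to(\Box\varphi\to\Box\psi)$; $\mathsf{K}_\Diamond$: $\Box(\varphi\to\psi)\to(\Diamond\varphi\to\Diamond\psi)$; $\mathsf{N}_\Diamond$: $\Diamond\bot\to\bot$; $\mathsf{C}_\Diamond$: $\Diamond(\varphi\vee\psi)\to\Diamond\varphi\vee\Diamond\psi$; $\mathsf{I}_{\Diamond\Box}$: $(\Diamond\varphi\to\Box\psi)\to\Box(\varphi\to\psi)$. For a set $\mathsf{Ax}$ of axioms, $\mathsf{CK}\oplus\mathsf{Ax}$ is the relation $\Gamma\vdash_{\mathsf{Ax}}\varphi$ inductively generated by: (Ax) $\Gamma\vdash\varphi$ whenever $\varphi$ is a substitution instance of an axiom of a standard Hilbert axiomatisation of intuitionistic propositional logic, of $\mathsf{K}_\Box$, of $\mathsf{K}_\Diamond$, or of an element of $\mathsf{Ax}$; (El) $\Gamma\vdash\varphi$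 if $\varphi\in\Gamma$; (MP) from $\Gamma\vdash\varphi$ and $\Gamma\vdash\varphi\to\psi$ infer $\Gamma\vdash\psi$; (Nec) from $\emptyset\vdash\varphi$ infer $\Gamma\vdash\Box\varphi$. A formula is derivable if $\emptyset\vdash_{\mathsf{Ax}}\varphi$. $\mathsf{CK}_\Box$ is the logic on $\Diamond$-free formulas axiomatised by intuitionistic propositional logic plus $\mathsf{K}_\Box$, closed under modus ponens and necessitation. A logic is a conservative extension of $\mathsf{CK}_\Box$ if its derivable $\Diamond$-free formulas are exactly the theorems of $\mathsf{CK}_\Box$. *)

theory Defs
  imports Main
begin

datatype fm = Var nat | Bot | And fm fm | Or fm fm | Imp fm fm | Box fm | Dia fm

fun diafree :: "fm \<Rightarrow> bool" where
  "diafree (Var p) = True"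
| "diafree Bot = True"
| "diafree (And a b) = (diafree a \<and> diafree b)"
| "diafree (Or a b) = (diafree a \<and> diafree b)"
| "diafree (Imp a b) = (diafree a \<and> diafree b)"
| "diafree (Box a) = diafree a"
| "diafree (Dia a) = False"

inductive ipc_ax :: "fm \<Rightarrow> bool" where
  A1: "ipc_ax (Imp a (Imp b a))"
| A2: "ipc_ax (Imp (Imp a (Imp b c)) (Imp (Imp a b) (Imp a c)))"
| A3: "ipc_ax (Imp (And a b) a)"
| A4: "ipc_ax (Imp (And a b) b)"
| A5: "ipc_ax (Imp a (Imp b (And a b)))"
| A6: "ipc_ax (Imp a (Or a b))"
| A7: "ipc_ax (Imp b (Or a b))"
| A8: "ipc_ax (Imp (Imp a c) (Imp (Imp b c) (Imp (Or a b) c)))"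
| A9: "ipc_ax (Imp Bot a)"

definition K_box :: "fm \<Rightarrow> bool" where
  "K_box f \<longleftrightarrow> (\<exists>a b. f = Imp (Box (Imp a b)) (Imp (Box a) (Box b)))"

definition K_dia :: "fm \<Rightarrow> bool" where
  "K_dia f \<longleftrightarrow> (\<exists>a b. f = Imp (Box (Imp a b)) (Imp (Dia a) (Dia b)))"

datatype axname = N_dia | C_dia | I_diabox

fun ax_inst :: "axname \<Rightarrow> fm \<Rightarrow> bool" where
  "ax_inst N_dia f \<longleftrightarrow> f = Imp (Dia Bot) Bot"
| "ax_inst C_dia f \<longleftrightarrow> (\<exists>a b. f = Imp (Dia (Or a b)) (Or (Dia a) (Dia b)))"
| "ax_inst I_diabox f \<longleftrightarrow> (\<exists>a b. f = Imp (Imp (Dia a) (Box b)) (Box (Imp a b)))"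

inductive deriv :: "axname set \<Rightarrow> fm set \<Rightarrow> fm \<Rightarrow> bool" where
  ax_ipc: "ipc_ax f \<Longrightarrow> deriv Ax \<Gamma> f"
| ax_kbox: "K_box f \<Longrightarrow> deriv Ax \<Gamma> f"
| ax_kdia: "K_dia f \<Longrightarrow> deriv Ax \<Gamma> f"
| ax_extra: "A \<in> Ax \<Longrightarrow> ax_inst A f \<Longrightarrow> deriv Ax \<Gamma> f"
| el: "f \<in> \<Gamma> \<Longrightarrow> deriv Ax \<Gamma> f"
| mp: "deriv Ax \<Gamma> f \<Longrightarrow> deriv Ax \<Gamma> (Imp f g) \<Longrightarrow> deriv Ax \<Gamma> g"
| nec: "deriv Ax {} f \<Longrightarrow> deriv Ax \<Gamma> (Box f)"

definition derivable :: "axname set \<Rightarrow> fm \<Rightarrow> bool" where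
  "derivable Ax f \<longleftrightarrow> deriv Ax {} f"

inductive ck_box :: "fm \<Rightarrow> bool" where
  cb_ipc: "ipc_ax f \<Longrightarrow> diafree f \<Longrightarrow> ck_box f"
| cb_kbox: "K_box f \<Longrightarrow> diafree f \<Longrightarrow> ck_box f"
| cb_mp: "ck_box f \<Longrightarrow> ck_box (Imp f g) \<Longrightarrow> ck_box g"
| cb_nec: "ck_box f \<Longrightarrow> ck_box (Box f)"

definition conservative_ext :: "axname set \<Rightarrow> bool" where
  "conservative_ext Ax \<longleftrightarrow> {f. diafree f \<and> derivable Ax f} = {f. ck_box f}"

end

theory Submission
  imports Defs
begin

fun tr :: "fm \<Rightarrow> fm \<Rightarrow> fm" where
  "tr d (Var p) = Var p"
| "tr d Bot = Bot"
| "tr d (And a b) = And (tr d a) (tr d b)"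
| "tr d (Or a b) = Or (tr d a) (tr d b)"
| "tr d (Imp a b) = Imp (tr d a) (tr d b)"
| "tr d (Box a) = Box (tr d a)"
| "tr d (Dia a) = d"

lemma tr_df: "diafree d \<Longrightarrow> diafree (tr d f)"
  by (induction f) auto

lemma tr_id: "diafree f \<Longrightarrow> tr d f = f"
  by (induction f) auto

lemma ck_df: "ck_box f \<Longrightarrow> diafree f"
  by (induction rule: ck_box.induct) auto

lemma ck_der: "ck_box f \<Longrightarrow> deriv Ax {} f"
  by (induction rule: ck_box.induct) (auto intro: deriv.intros)

abbreviation "T \<equiv> Imp Bot Bot"

lemma ckT: "ck_box T" by (rule cb_ipc) (auto intro: ipc_ax.intros)

lemma weak: "ck_box a \<Longrightarrow> diafree b \<Longrightarrow> ck_box (Imp b a)"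
  apply (rule cb_mp[of a])
   apply assumption
  apply (rule cb_ipc)
  using ck_df by (auto intro: ipc_ax.intros)

lemma ax2: "diafree a \<Longrightarrow> diafree b \<Longrightarrow> diafree c \<Longrightarrow>
   ck_box (Imp (Imp a (Imp b c)) (Imp (Imp a b) (Imp a c)))"
  by (rule cb_ipc) (auto intro: ipc_ax.intros)

lemma idI: "diafree a \<Longrightarrow> ck_box (Imp a a)"
proof -
  assume d: "diafree a"
  have 1: "ck_box (Imp a (Imp (Imp a a) a))" using d by (intro cb_ipc) (auto intro: ipc_ax.intros)
  have 2: "ck_box (Imp a (Imp a a))" using d by (intro cb_ipc) (auto intro: ipc_ax.intros)
  have "ck_box (Imp (Imp a (Imp a a)) (Imp a a))" using cb_mp[OF 1 ax2] d by auto
  then show ?thesis using cb_mp[OF 2] by auto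
qed

lemma comp: "ck_box (Imp x y) \<Longrightarrow> ck_box (Imp y z) \<Longrightarrow> ck_box (Imp x z)"
proof -
  assume a: "ck_box (Imp x y)" and b: "ck_box (Imp y z)"
  have d: "diafree x" "diafree y" "diafree z" using ck_df[OF a] ck_df[OF b] by auto
  have "ck_box (Imp x (Imp y z))" using weak[OF b] d by auto
  from cb_mp[OF this ax2[OF d]] have "ck_box (Imp (Imp x y) (Imp x z))" .
  from cb_mp[OF a this] show ?thesis .
qed

lemma I_T: "diafree a \<Longrightarrow> diafree b \<Longrightarrow> ck_box (Imp (Imp T (Box b)) (Box (Imp a b)))"
proof -
  assume da: "diafree a" and db: "diafree b"
  let ?H = "Imp T (Box b)"
  have h1: "ck_box (Imp ?H ?H)" using idI db by auto
  have h2: "ck_box (Imp ?H T)" using weak[OF ckT] db by auto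
  have "ck_box (Imp (Imp ?H (Imp T (Box b))) (Imp (Imp ?H T) (Imp ?H (Box b))))"
    using ax2 db by auto
  then have h3: "ck_box (Imp ?H (Box b))" using cb_mp[OF h1] cb_mp[OF h2] by blast
  have "ck_box (Imp b (Imp a b))" using da db by (intro cb_ipc) (auto intro: ipc_ax.intros)
  then have "ck_box (Box (Imp b (Imp a b)))" by (rule cb_nec)
  moreover have "ck_box (Imp (Box (Imp b (Imp a b))) (Imp (Box b) (Box (Imp a b))))"
    using da db by (intro cb_kbox) (auto simp: K_box_def)
  ultimately have "ck_box (Imp (Box b) (Box (Imp a b)))" by (rule cb_mp)
  from comp[OF h3 this] show ?thesis .
qed

lemma ipc_tr: "ipc_ax f \<Longrightarrow> ipc_ax (tr d f)"
  by (induction rule: ipc_ax.induct) (auto intro: ipc_ax.intros)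

lemma cons_T: "deriv Ax \<Gamma> f \<Longrightarrow> N_dia \<notin> Ax \<Longrightarrow> \<Gamma> = {} \<Longrightarrow> ck_box (tr T f)"
proof (induction rule: deriv.induct)
  case (ax_ipc f Ax \<Gamma>) then show ?case
    by (intro cb_ipc ipc_tr tr_df) auto
next
  case (ax_kbox f Ax \<Gamma>) then show ?case
    by (intro cb_kbox) (auto simp: K_box_def tr_df)
next
  case (ax_kdia f Ax \<Gamma>)
  then obtain a b where f: "f = Imp (Box (Imp a b)) (Imp (Dia a) (Dia b))" by (auto simp: K_dia_def)
  have "ck_box (Imp T T)" by (rule weak[OF ckT]) simp
  then show ?case unfolding f by (simp add: weak tr_df)
next
  case (ax_extra A Ax f \<Gamma>) then show ?case
  proof (cases A)
    case C_dia with ax_extra obtain a b where f: "f = Imp (Dia (Or a b)) (Or (Dia a) (Dia b))" by auto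
    show ?thesis unfolding f by (rule cb_ipc) (auto intro: ipc_ax.intros)
  next
    case I_diabox with ax_extra obtain a b where f: "f = Imp (Imp (Dia a) (Box b)) (Box (Imp a b))" by auto
    show ?thesis unfolding f by (simp add: I_T tr_df)
  qed auto
next
  case (el f \<Gamma> Ax) then show ?case by auto
next
  case (mp Ax \<Gamma> f g)
  then have "ck_box (tr T f)" "ck_box (Imp (tr T f) (tr T g))" by auto
  then show ?case by (rule cb_mp)
next
  case (nec Ax f \<Gamma>)
  then have "ck_box (tr T f)" by auto
  then show ?case by (simp add: cb_nec)
qed

lemma cons_B: "deriv Ax \<Gamma> f \<Longrightarrow> I_diabox \<notin> Ax \<Longrightarrow> \<Gamma> = {} \<Longrightarrow> ck_box (tr Bot f)"
proof (induction rule: deriv.induct)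
  case (ax_ipc f Ax \<Gamma>) then show ?case
    by (intro cb_ipc ipc_tr tr_df) auto
next
  case (ax_kbox f Ax \<Gamma>) then show ?case
    by (intro cb_kbox) (auto simp: K_box_def tr_df)
next
  case (ax_kdia f Ax \<Gamma>)
  then obtain a b where f: "f = Imp (Box (Imp a b)) (Imp (Dia a) (Dia b))" by (auto simp: K_dia_def)
  show ?case unfolding f by (simp add: weak tr_df ckT)
next
  case (ax_extra A Ax f \<Gamma>) then show ?case
  proof (cases A)
    case C_dia with ax_extra obtain a b where f: "f = Imp (Dia (Or a b)) (Or (Dia a) (Dia b))" by auto
    show ?thesis unfolding f by (rule cb_ipc) (auto intro: ipc_ax.intros)
  next
    case N_dia with ax_extra have f: "f = Imp (Dia Bot) Bot" by auto
    show ?thesis unfolding f using ckT by simp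
  qed auto
next
  case (el f \<Gamma> Ax) then show ?case by auto
next
  case (mp Ax \<Gamma> f g)
  then have "ck_box (tr Bot f)" "ck_box (Imp (tr Bot f) (tr Bot g))" by auto
  then show ?case by (rule cb_mp)
next
  case (nec Ax f \<Gamma>)
  then have "ck_box (tr Bot f)" by auto
  then show ?case by (simp add: cb_nec)
qed

definition le :: "nat \<Rightarrow> nat \<Rightarrow> bool" where "le x y \<longleftrightarrow> x = y \<or> (x = 0 \<and> y = 1)"
definition R :: "nat \<Rightarrow> nat \<Rightarrow> bool" where "R x y \<longleftrightarrow> x = 0 \<and> y = 2"

fun sat :: "nat \<Rightarrow> fm \<Rightarrow> bool" where
  "sat w (Var p) = False"
| "sat w Bot = False"
| "sat w (And a b) = (sat w a \<and> sat w b)"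
| "sat w (Or a b) = (sat w a \<or> sat w b)"
| "sat w (Imp a b) = (\<forall>w'. le w w' \<longrightarrow> sat w' a \<longrightarrow> sat w' b)"
| "sat w (Box a) = (\<forall>w' v. le w w' \<longrightarrow> R w' v \<longrightarrow> sat v a)"
| "sat w (Dia a) = False"

lemma le_trans': "le x y \<Longrightarrow> le y z \<Longrightarrow> le x z" by (auto simp: le_def)
lemma le_refl': "le x x" by (simp add: le_def)

lemma pers: "sat w f \<Longrightarrow> le w w' \<Longrightarrow> sat w' f"
proof (induction f arbitrary: w w')
  case (Imp a b) then show ?case using le_trans' by (metis sat.simps(5))
next
  case (Box a) then show ?case using le_trans' by (metis sat.simps(6))
qed auto

lemma pers01: "sat 0 a \<Longrightarrow> sat (Suc 0) a"
  using pers by (auto simp: le_def)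

lemma ipc_sound: "ipc_ax f \<Longrightarrow> sat w f"
  by (induction rule: ipc_ax.induct) (auto simp: le_def intro: pers01)

lemma ck_sound: "ck_box f \<Longrightarrow> sat w f"
proof (induction arbitrary: w rule: ck_box.induct)
  case (cb_ipc f) then show ?case using ipc_sound by auto
next
  case (cb_kbox f) then show ?case
    by (auto simp: K_box_def le_def)
next
  case (cb_mp f g) then show ?case using le_refl' by auto
next
  case (cb_nec f) then show ?case by auto
qed

abbreviation "Neg x \<equiv> Imp x Bot"
abbreviation "W \<equiv> Imp (Neg (Neg (Box (Neg T)))) (Box (Neg T))"

lemma sT: "sat v T" by auto

lemma sNT: "\<not> sat v (Neg T)"
  using le_refl' sT by (metis sat.simps(2,5))

lemma sB: "sat w (Box (Neg T)) \<longleftrightarrow> w \<noteq> 0"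
proof
  assume "sat w (Box (Neg T))"
  then have "\<forall>w' v. le w w' \<longrightarrow> R w' v \<longrightarrow> sat v (Neg T)" by (simp only: sat.simps)
  then have "\<not> (le w 0 \<and> R 0 2)" using sNT by blast
  then show "w \<noteq> 0" by (auto simp: le_def R_def)
next
  assume "w \<noteq> 0"
  then have "\<forall>w' v. le w w' \<longrightarrow> \<not> R w' v" by (auto simp: le_def R_def)
  then show "sat w (Box (Neg T))" by (simp only: sat.simps) blast
qed

lemma sNB: "\<not> sat w (Neg (Box (Neg T)))"
proof
  assume h: "sat w (Neg (Box (Neg T)))"
  have "\<exists>w'. le w w' \<and> w' \<noteq> 0" by (cases "w = 0") (auto simp: le_def)
  then obtain w' where "le w w'" "w' \<noteq> 0" by blast
  with h sB show False by (simp only: sat.simps) blast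
qed

lemma W_not: "\<not> ck_box W"
proof
  assume "ck_box W"
  then have "sat 0 W" by (rule ck_sound)
  moreover have "sat 0 (Neg (Neg (Box (Neg T))))" using sNB by (simp only: sat.simps) blast
  moreover have "\<not> sat 0 (Box (Neg T))" using sB by simp
  ultimately show False using le_refl' by (simp only: sat.simps) blast
qed

lemma mono_der: "deriv Ax \<Gamma> f \<Longrightarrow> \<Gamma> \<subseteq> \<Delta> \<Longrightarrow> deriv Ax \<Delta> f"
proof (induction arbitrary: \<Delta> rule: deriv.induct)
  case (mp Ax \<Gamma> f g) then show ?case by (meson deriv.mp)
qed (auto intro: deriv.intros)

lemma ded: "deriv Ax \<Gamma>' f \<Longrightarrow> \<Gamma>' = insert a \<Gamma> \<Longrightarrow> deriv Ax \<Gamma> (Imp a f)"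
proof (induction arbitrary: \<Gamma> rule: deriv.induct)
  case (ax_ipc f Ax \<Gamma>')
  then show ?case by (meson A1 deriv.ax_ipc deriv.mp)
next
  case (ax_kbox f Ax \<Gamma>')
  then show ?case by (meson A1 deriv.ax_ipc deriv.ax_kbox deriv.mp)
next
  case (ax_kdia f Ax \<Gamma>')
  then show ?case by (meson A1 deriv.ax_ipc deriv.ax_kdia deriv.mp)
next
  case (ax_extra A Ax f \<Gamma>')
  then show ?case by (meson A1 deriv.ax_ipc deriv.ax_extra deriv.mp)
next
  case (el f \<Gamma>' Ax)
  show ?case
  proof (cases "f = a")
    case True
    have 1: "deriv Ax \<Gamma> (Imp a (Imp (Imp a a) a))" by (intro deriv.ax_ipc A1)
    have 2: "deriv Ax \<Gamma> (Imp a (Imp a a))" by (intro deriv.ax_ipc A1)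
    have 3: "deriv Ax \<Gamma> (Imp (Imp a (Imp (Imp a a) a)) (Imp (Imp a (Imp a a)) (Imp a a)))"
      by (intro deriv.ax_ipc A2)
    show ?thesis using True deriv.mp[OF 2 deriv.mp[OF 1 3]] by simp
  next
    case False
    with el have "deriv Ax \<Gamma> f" by (auto intro: deriv.el)
    then show ?thesis by (meson A1 deriv.ax_ipc deriv.mp)
  qed
next
  case (mp Ax \<Gamma>' f g)
  have 1: "deriv Ax \<Gamma> (Imp a f)" using mp by auto
  have 2: "deriv Ax \<Gamma> (Imp a (Imp f g))" using mp by auto
  have 3: "deriv Ax \<Gamma> (Imp (Imp a (Imp f g)) (Imp (Imp a f) (Imp a g)))"
    by (intro deriv.ax_ipc A2)
  show ?case using deriv.mp[OF 1 deriv.mp[OF 2 3]] .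
next
  case (nec Ax f \<Gamma>')
  then have "deriv Ax \<Gamma> (Box f)" by (intro deriv.nec)
  then show ?case by (meson A1 deriv.ax_ipc deriv.mp)
qed

lemma W_der: "N_dia \<in> Ax \<Longrightarrow> I_diabox \<in> Ax \<Longrightarrow> deriv Ax {} W"
proof -
  assume N: "N_dia \<in> Ax" and I: "I_diabox \<in> Ax"
  define G where "G = {Box (Neg T), Dia T, Neg (Neg (Box (Neg T)))}"
  have "deriv Ax G (Imp (Box (Neg T)) (Imp (Dia T) (Dia Bot)))"
    by (rule deriv.ax_kdia) (auto simp: K_dia_def)
  then have "deriv Ax G (Dia Bot)"
  proof -
    assume h: "deriv Ax G (Imp (Box (Neg T)) (Imp (Dia T) (Dia Bot)))"
    have a: "deriv Ax G (Box (Neg T))" unfolding G_def by (rule deriv.el) simp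
    have b: "deriv Ax G (Dia T)" unfolding G_def by (rule deriv.el) simp
    show ?thesis by (rule deriv.mp[OF b deriv.mp[OF a h]])
  qed
  moreover have "deriv Ax G (Imp (Dia Bot) Bot)" by (rule deriv.ax_extra[OF N]) simp
  ultimately have "deriv Ax G Bot" by (rule deriv.mp)
  then have "deriv Ax {Dia T, Neg (Neg (Box (Neg T)))} (Neg (Box (Neg T)))"
    by (rule ded) (auto simp: G_def)
  moreover have "deriv Ax {Dia T, Neg (Neg (Box (Neg T)))} (Neg (Neg (Box (Neg T))))"
    by (intro deriv.el) auto
  ultimately have "deriv Ax {Dia T, Neg (Neg (Box (Neg T)))} Bot" by (rule deriv.mp)
  moreover have "deriv Ax {Dia T, Neg (Neg (Box (Neg T)))} (Imp Bot (Box Bot))"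
    by (intro deriv.ax_ipc A9)
  ultimately have "deriv Ax {Dia T, Neg (Neg (Box (Neg T)))} (Box Bot)" by (rule deriv.mp)
  then have "deriv Ax {Neg (Neg (Box (Neg T)))} (Imp (Dia T) (Box Bot))"
    by (rule ded) auto
  moreover have "deriv Ax {Neg (Neg (Box (Neg T)))} (Imp (Imp (Dia T) (Box Bot)) (Box (Neg T)))"
    by (rule deriv.ax_extra[OF I]) auto
  ultimately have "deriv Ax {Neg (Neg (Box (Neg T)))} (Box (Neg T))" by (rule deriv.mp)
  then show ?thesis by (rule ded) auto
qed

theorem mainTheorem13:
  fixes Ax :: "axname set"
  shows "conservative_ext Ax \<longleftrightarrow> (N_dia \<notin> Ax \<or> I_diabox \<notin> Ax)"
proof
  assume c: "conservative_ext Ax"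
  show "N_dia \<notin> Ax \<or> I_diabox \<notin> Ax"
  proof (rule ccontr)
    assume "\<not> (N_dia \<notin> Ax \<or> I_diabox \<notin> Ax)"
    then have "deriv Ax {} W" using W_der by auto
    then have "W \<in> {f. diafree f \<and> derivable Ax f}" by (simp add: derivable_def)
    with c have "ck_box W" by (simp add: conservative_ext_def)
    with W_not show False by simp
  qed
next
  assume h: "N_dia \<notin> Ax \<or> I_diabox \<notin> Ax"
  have "diafree f \<and> derivable Ax f \<longleftrightarrow> ck_box f" for f
  proof
    assume a: "diafree f \<and> derivable Ax f"
    then have d: "deriv Ax {} f" by (simp add: derivable_def)
    from h show "ck_box f"
    proof
      assume nn: "N_dia \<notin> Ax"
      have "ck_box (tr T f)" using cons_T[OF d nn] by simp
      moreover have "tr T f = f" using a by (simp add: tr_id)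
      ultimately show ?thesis by simp
    next
      assume ni: "I_diabox \<notin> Ax"
      have "ck_box (tr Bot f)" using cons_B[OF d ni] by simp
      moreover have "tr Bot f = f" using a by (simp add: tr_id)
      ultimately show ?thesis by simp
    qed
  next
    assume "ck_box f"
    then show "diafree f \<and> derivable Ax f" by (simp add: ck_df ck_der derivable_def)
  qed
  then show "conservative_ext Ax" unfolding conservative_ext_def by blast
qed

end
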